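(* Let $d,n\in\mathbb{N}$, $W\in M_n(\mathbb{Z}_d)$, $\Omega=W-W^T$, $R$ a commutative ring, $\omega\in R$ such that $m\mapsto\omega^m$ is an embedding $\zeta:\mathbb{Z}_d\to R^\times$, $A\le R^\times$ a subgroup with $\omega\in A$, $M$ an associative $R$-algebra, and $\tau:\mathbb{Z}_d^n\to M$ such that $\mu:\mathcal{G}_d^n(A,\zeta,W)\to M$, $\mu(a,p,x)=a\,\omega^p\tau(x)$, is an injective multiplicative homomorphism. Then for all $(a,p,x),(b,q,y)\in\mathcal{G}_d^n(A,\zeta,W)$, $$\mu(a,p,x)\mu(b,q,y)\mu(a,p,x)^{-1}\mu(b,q,y)^{-1}=\omega^{x^T\Omega y},$$ and $$\mu(a,p,x)\mu(b,q,y)-\mu(b,q,y)\mu(a,p,x)=\big(1-\omega^{-x^T\Omega y}\big)\mu(a,p,x)\mu(b,q,y).$$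
   Context: $R^\times$ is the group of units of $R$. Let $F\subseteq A$ be a fixed set of representatives of $A/\zeta(\mathbb{Z}_d)$ with $1\in F$, and $r:A\to F$, $u:A\to\mathbb{Z}_d$ the maps with $a=r(a)\omega^{u(a)}$. The polar commutator group $\mathcal{G}_d^n(A,\zeta,W)$ is the set $F\times\mathbb{Z}_d\times\mathbb{Z}_d^n$ with multiplication $(a,p,x)\cdot(b,q,y)=(r(ab),\,u(ab)+p+q+x^TWy,\,x+y)$. *)

theory Defs
  imports Main
begin

text \<open>Elements of Z_d (d >= 1) are represented by integers in {0..<d};
  vectors in Z_d^n by functions nat => int with entries in {0..<d} at indices i < n
  and 0 elsewhere; matrices in M_n(Z_d) by functions nat => nat => int (only the
  entries with i,j < n matter).  The R-algebra M is a type of class ring_1 with a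
  scalar multiplication smult satisfying the algebra axioms.\<close>

definition zd :: "nat \<Rightarrow> int set" where
  "zd d = {0..<int d}"

definition zdvec :: "nat \<Rightarrow> nat \<Rightarrow> (nat \<Rightarrow> int) set" where
  "zdvec d n = {x. (\<forall>i<n. x i \<in> zd d) \<and> (\<forall>i\<ge>n. x i = 0)}"

definition zdmat :: "nat \<Rightarrow> nat \<Rightarrow> (nat \<Rightarrow> nat \<Rightarrow> int) \<Rightarrow> bool" where
  "zdmat d n W \<longleftrightarrow> (\<forall>i<n. \<forall>j<n. W i j \<in> zd d)"

definition bilin :: "nat \<Rightarrow> nat \<Rightarrow> (nat \<Rightarrow> nat \<Rightarrow> int) \<Rightarrow> (nat \<Rightarrow> int) \<Rightarrow> (nat \<Rightarrow> int) \<Rightarrow> int" where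
  "bilin d n W x y = (\<Sum>i<n. \<Sum>j<n. x i * W i j * y j) mod int d"

definition Omega :: "nat \<Rightarrow> (nat \<Rightarrow> nat \<Rightarrow> int) \<Rightarrow> nat \<Rightarrow> nat \<Rightarrow> int" where
  "Omega d W i j = (W i j - W j i) mod int d"

text \<open>omega^m for m in Z_d (well defined since omega^d = 1).\<close>
definition zpow :: "'r::comm_ring_1 \<Rightarrow> nat \<Rightarrow> int \<Rightarrow> 'r" where
  "zpow \<omega> d m = \<omega> ^ nat (m mod int d)"

definition vadd :: "nat \<Rightarrow> nat \<Rightarrow> (nat \<Rightarrow> int) \<Rightarrow> (nat \<Rightarrow> int) \<Rightarrow> (nat \<Rightarrow> int)" where
  "vadd d n x y = (\<lambda>i. if i < n then (x i + y i) mod int d else 0)"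

definition unit_subgroup :: "'r::comm_ring_1 set \<Rightarrow> bool" where
  "unit_subgroup A \<longleftrightarrow> 1 \<in> A \<and> (\<forall>a\<in>A. \<forall>b\<in>A. a * b \<in> A)
     \<and> (\<forall>a\<in>A. \<exists>b\<in>A. a * b = 1)"

definition pcg_carrier :: "'r set \<Rightarrow> nat \<Rightarrow> nat \<Rightarrow> ('r \<times> int \<times> (nat \<Rightarrow> int)) set" where
  "pcg_carrier F d n = F \<times> zd d \<times> zdvec d n"

definition pcg_mult ::
  "nat \<Rightarrow> nat \<Rightarrow> (nat \<Rightarrow> nat \<Rightarrow> int) \<Rightarrow> ('r::comm_ring_1 \<Rightarrow> 'r) \<Rightarrow> ('r \<Rightarrow> int)
   \<Rightarrow> 'r \<times> int \<times> (nat \<Rightarrow> int) \<Rightarrow> 'r \<times> int \<times> (nat \<Rightarrow> int) \<Rightarrow> 'r \<times> int \<times> (nat \<Rightarrow> int)" where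
  "pcg_mult d n W r u g h =
     (case g of (a, p, x) \<Rightarrow> case h of (b, q, y) \<Rightarrow>
        (r (a * b), (u (a * b) + p + q + bilin d n W x y) mod int d, vadd d n x y))"

definition is_algebra :: "('r::comm_ring_1 \<Rightarrow> 'm::ring_1 \<Rightarrow> 'm) \<Rightarrow> bool" where
  "is_algebra smult \<longleftrightarrow>
     (\<forall>a x y. smult a (x + y) = smult a x + smult a y) \<and>
     (\<forall>a b x. smult (a + b) x = smult a x + smult b x) \<and>
     (\<forall>a b x. smult (a * b) x = smult a (smult b x)) \<and>
     (\<forall>x. smult 1 x = x) \<and>
     (\<forall>a x y. smult a (x * y) = smult a x * y) \<and>
     (\<forall>a x y. smult a (x * y) = x * smult a y)"

definition is_inv :: "'m::ring_1 \<Rightarrow> 'm \<Rightarrow> bool" where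
  "is_inv m v \<longleftrightarrow> m * v = 1 \<and> v * m = 1"

definition minv :: "'m::ring_1 \<Rightarrow> 'm" where
  "minv m = (THE v. is_inv m v)"

end

theory Submission
  imports Defs "HOL-Number_Theory.Cong"
begin

lemma zpow_mod: "zpow w d (m mod int d) = zpow w d m"
  by (simp add: zpow_def)

lemma pow_mod_eq:
  fixes w :: "'r::comm_ring_1"
  assumes "w ^ d = 1"
  shows "w ^ a = w ^ (a mod d)"
proof -
  have "w ^ a = w ^ (d * (a div d) + a mod d)" by simp
  also have "\<dots> = (w ^ d) ^ (a div d) * w ^ (a mod d)" by (simp only: power_add power_mult)
  finally show ?thesis using assms by simp
qed

lemma zpow_add:
  fixes w :: "'r::comm_ring_1"
  assumes "w ^ d = 1" "d \<ge> 1"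
  shows "zpow w d (m + k) = zpow w d m * zpow w d k"
proof -
  let ?a = "nat (m mod int d)" and ?b = "nat (k mod int d)"
  have "zpow w d m * zpow w d k = w ^ (?a + ?b)" by (simp add: zpow_def power_add)
  also have "\<dots> = w ^ ((?a + ?b) mod d)" using pow_mod_eq[OF assms(1)] by blast
  also have "(?a + ?b) mod d = nat ((m + k) mod int d)"
  proof -
    have "int ((?a + ?b) mod d) = (m mod int d + k mod int d) mod int d"
      using assms(2) by (simp add: zmod_int)
    also have "\<dots> = (m + k) mod int d" by (simp add: mod_add_eq)
    finally show ?thesis by linarith
  qed
  finally show ?thesis by (simp add: zpow_def)
qed

lemma zpow_0: "zpow w d 0 = 1" by (simp add: zpow_def)

lemma inv_unique: "is_inv (m::'m::ring_1) v \<Longrightarrow> minv m = v"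
  unfolding minv_def
proof (rule the_equality)
  fix w assume "is_inv m v" "is_inv m w"
  then have "w = w * (m * v)" "v * 1 = (w * m) * v" by (auto simp: is_inv_def)
  then show "w = v" by (simp add: mult.assoc)
qed

theorem proposition24:
  fixes d n :: nat
    and W :: "nat \<Rightarrow> nat \<Rightarrow> int"
    and \<omega> :: "'r::comm_ring_1"
    and A F :: "'r set"
    and r :: "'r \<Rightarrow> 'r" and u :: "'r \<Rightarrow> int"
    and smult :: "'r \<Rightarrow> 'm::ring_1 \<Rightarrow> 'm"
    and \<tau> :: "(nat \<Rightarrow> int) \<Rightarrow> 'm"
    and \<mu> :: "'r \<times> int \<times> (nat \<Rightarrow> int) \<Rightarrow> 'm"
  assumes d_pos: "d \<ge> 1"
    and W: "zdmat d n W"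
    and omega_ord: "\<omega> ^ d = 1"
    and omega_inj: "inj_on (\<lambda>m. \<omega> ^ m) {..<d}"
    and A: "unit_subgroup A" and omega_A: "\<omega> \<in> A"
    and F: "F \<subseteq> A" "1 \<in> F"
    and F_repr: "\<forall>a\<in>A. \<exists>!f. f \<in> F \<and> (\<exists>m<d. a = f * \<omega> ^ m)"
    and ru: "\<forall>a\<in>A. r a \<in> F \<and> u a \<in> zd d \<and> a = r a * zpow \<omega> d (u a)"
    and alg: "is_algebra smult"
    and mu_def: "\<And>a p x. \<mu> (a, p, x) = smult (a * zpow \<omega> d p) (\<tau> x)"
    and mu_hom: "\<forall>g\<in>pcg_carrier F d n. \<forall>h\<in>pcg_carrier F d n.
                    \<mu> (pcg_mult d n W r u g h) = \<mu> g * \<mu> h"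
    and mu_unit: "\<mu> (1, 0, (\<lambda>_. 0)) = 1"
    and mu_inj: "inj_on \<mu> (pcg_carrier F d n)"
  shows "\<forall>a p x b q y. (a, p, x) \<in> pcg_carrier F d n \<longrightarrow> (b, q, y) \<in> pcg_carrier F d n \<longrightarrow>
           (\<exists>v. is_inv (\<mu> (a, p, x)) v) \<and> (\<exists>w. is_inv (\<mu> (b, q, y)) w) \<and>
           \<mu> (a, p, x) * \<mu> (b, q, y) * minv (\<mu> (a, p, x)) * minv (\<mu> (b, q, y))
             = smult (zpow \<omega> d (bilin d n (Omega d W) x y)) 1 \<and>
           \<mu> (a, p, x) * \<mu> (b, q, y) - \<mu> (b, q, y) * \<mu> (a, p, x)
             = smult (1 - zpow \<omega> d (- bilin d n (Omega d W) x y)) (\<mu> (a, p, x) * \<mu> (b, q, y))"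
proof -
  let ?z = "zpow \<omega> d"
  have zadd: "\<And>m k. ?z (m + k) = ?z m * ?z k" using zpow_add[OF omega_ord d_pos] .
  have sm_mult: "\<And>a b x. smult (a * b) x = smult a (smult b x)"
    and sm_one: "\<And>x. smult 1 x = x"
    and sm_left: "\<And>a x y. smult a x * y = smult a (x * y)"
    and sm_right: "\<And>a x y. x * smult a y = smult a (x * y)"
    and sm_add: "\<And>a b x. smult (a + b) x = smult a x + smult b x"
    using alg unfolding is_algebra_def by metis+
  have sm_diff: "\<And>a b x. smult (a - b) x = smult a x - smult b x"
    by (metis sm_add diff_add_cancel add_diff_cancel)
  have one_A: "1 \<in> A" using A by (simp add: unit_subgroup_def)
  have zero_zd: "0 \<in> zd d" using d_pos by (simp add: zd_def)
  have mu1: "\<mu> (1, 0, x) = \<tau> x" for x by (simp add: mu_def zpow_0 sm_one)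
  have tau0: "\<tau> (\<lambda>_. 0) = 1" using mu_unit mu1 by simp
  have T: "\<tau> x * \<tau> y = smult (?z (bilin d n W x y)) (\<tau> (vadd d n x y))"
    if x: "x \<in> zdvec d n" and y: "y \<in> zdvec d n" for x y
  proof -
    have c: "(1, 0, x) \<in> pcg_carrier F d n" "(1, 0, y) \<in> pcg_carrier F d n"
      using x y F zero_zd by (auto simp: pcg_carrier_def)
    have "\<tau> x * \<tau> y = \<mu> (pcg_mult d n W r u (1, 0, x) (1, 0, y))"
      using mu_hom c mu1 by metis
    also have "\<dots> = smult (r 1 * ?z ((u 1 + bilin d n W x y) mod int d)) (\<tau> (vadd d n x y))"
      by (simp add: pcg_mult_def mu_def)
    also have "r 1 * ?z ((u 1 + bilin d n W x y) mod int d) = (r 1 * ?z (u 1)) * ?z (bilin d n W x y)"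
      by (simp add: zpow_mod zadd mult.assoc)
    also have "r 1 * ?z (u 1) = 1" using ru one_A by metis
    finally show ?thesis by simp
  qed
  have P: "\<mu> (a, p, x) * \<mu> (b, q, y) = smult (a * b * ?z (p + q + bilin d n W x y)) (\<tau> (vadd d n x y))"
    if x: "x \<in> zdvec d n" and y: "y \<in> zdvec d n" for x y a b p q
  proof -
    have "\<mu> (a, p, x) * \<mu> (b, q, y) = smult (a * ?z p) (smult (b * ?z q) (\<tau> x * \<tau> y))"
      by (simp add: mu_def sm_left sm_right) (metis sm_mult mult.commute)
    also have "\<dots> = smult ((a * ?z p) * ((b * ?z q) * ?z (bilin d n W x y))) (\<tau> (vadd d n x y))"
      by (simp add: T x y sm_mult)
    also have "(a * ?z p) * ((b * ?z q) * ?z (bilin d n W x y)) = a * b * ?z (p + q + bilin d n W x y)"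
      by (simp add: zadd algebra_simps)
    finally show ?thesis .
  qed
  define vneg where "vneg x = (\<lambda>i. if i < n then (- x i) mod int d else 0)" for x :: "nat \<Rightarrow> int"
  have vneg_in: "vneg x \<in> zdvec d n" for x
    using d_pos by (auto simp: vneg_def zdvec_def zd_def)
  have vneg1: "vadd d n x (vneg x) = (\<lambda>_. 0)" for x
    by (rule ext) (simp add: vadd_def vneg_def mod_add_right_eq)
  have vneg2: "vadd d n (vneg x) x = (\<lambda>_. 0)" for x
    by (rule ext) (simp add: vadd_def vneg_def mod_add_left_eq)
  have inv: "\<exists>v. is_inv (\<mu> (a, p, x)) v" if g: "(a, p, x) \<in> pcg_carrier F d n" for a p x
  proof -
    have x: "x \<in> zdvec d n" and aA: "a \<in> A" using g F by (auto simp: pcg_carrier_def)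
    obtain a' where a': "a * a' = 1" using A aA by (auto simp: unit_subgroup_def)
    let ?B1 = "bilin d n W x (vneg x)" and ?B2 = "bilin d n W (vneg x) x"
    define v1 where "v1 = \<mu> (a', - p - ?B1, vneg x)"
    define v2 where "v2 = \<mu> (a', - p - ?B2, vneg x)"
    have r: "\<mu> (a, p, x) * v1 = 1"
      unfolding v1_def P[OF x vneg_in] vneg1 using a' by (simp add: tau0 zpow_0 sm_one)
    have l: "v2 * \<mu> (a, p, x) = 1"
      unfolding v2_def P[OF vneg_in x] vneg2 using a' by (simp add: tau0 zpow_0 sm_one mult.commute)
    have "v2 = v1" by (metis r l mult.assoc mult_1_left mult_1_right)
    then show ?thesis using r l unfolding is_inv_def by blast
  qed
  show ?thesis
  proof (intro allI impI conjI)
    fix a p x b q y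
    assume g: "(a, p, x) \<in> pcg_carrier F d n" and h: "(b, q, y) \<in> pcg_carrier F d n"
    have x: "x \<in> zdvec d n" and y: "y \<in> zdvec d n" using g h by (auto simp: pcg_carrier_def)
    show ig: "\<exists>v. is_inv (\<mu> (a, p, x)) v" using inv g .
    show ih: "\<exists>v. is_inv (\<mu> (b, q, y)) v" using inv h .
    let ?c = "?z (bilin d n (Omega d W) x y)"
    let ?c' = "?z (- bilin d n (Omega d W) x y)"
    define S where "S x y = (\<Sum>i<n. \<Sum>j<n. x i * W i j * y j)" for x y :: "nat \<Rightarrow> int"
    have cong: "(bilin d n (Omega d W) x y + bilin d n W y x) mod int d = bilin d n W x y mod int d"
    proof -
      have e1: "[(\<Sum>i<n. \<Sum>j<n. x i * Omega d W i j * y j) = (\<Sum>i<n. \<Sum>j<n. x i * (W i j - W j i) * y j)] (mod int d)"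
        by (intro cong_sum cong_mult cong_refl) (simp add: Omega_def cong_def)
      have e2: "S y x = (\<Sum>i<n. \<Sum>j<n. x i * W j i * y j)"
        unfolding S_def apply (rule trans[OF sum.swap]) apply (intro sum.cong refl) by (simp add: mult_ac)
      have e3: "(\<Sum>i<n. \<Sum>j<n. x i * (W i j - W j i) * y j) = S x y - S y x"
      proof -
        have "(\<Sum>i<n. \<Sum>j<n. x i * (W i j - W j i) * y j) = S x y - (\<Sum>i<n. \<Sum>j<n. x i * W j i * y j)"
          unfolding S_def by (simp add: sum_subtractf algebra_simps)
        then show ?thesis by (simp only: e2)
      qed
      have "[bilin d n (Omega d W) x y + bilin d n W y x = (S x y - S y x) + S y x] (mod int d)"
        unfolding bilin_def S_def[symmetric] using e1 e3
        by (intro cong_add) (auto simp: cong_def)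
      then show ?thesis by (simp add: bilin_def S_def cong_def)
    qed
    have cz: "?z (bilin d n W x y) = ?c * ?z (bilin d n W y x)"
      by (metis cong zadd zpow_mod)
    have comm: "\<mu> (a, p, x) * \<mu> (b, q, y) = smult ?c (\<mu> (b, q, y) * \<mu> (a, p, x))"
    proof -
      have "vadd d n y x = vadd d n x y" unfolding vadd_def by (metis add.commute)
      then show ?thesis
        by (simp add: P x y sm_mult[symmetric] zadd cz algebra_simps)
    qed
    have c'c: "?c' * ?c = 1" by (metis zadd zpow_0 add.left_inverse)
    have comm2: "\<mu> (b, q, y) * \<mu> (a, p, x) = smult ?c' (\<mu> (a, p, x) * \<mu> (b, q, y))"
      by (simp add: comm sm_mult[symmetric] c'c sm_one)
    obtain v where v: "is_inv (\<mu> (a, p, x)) v" using ig by blast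
    obtain w where w: "is_inv (\<mu> (b, q, y)) w" using ih by blast
    show "\<mu> (a, p, x) * \<mu> (b, q, y) * minv (\<mu> (a, p, x)) * minv (\<mu> (b, q, y)) = smult ?c 1"
    proof -
      have "\<mu> (a, p, x) * \<mu> (b, q, y) * v * w = smult ?c (\<mu> (b, q, y) * (\<mu> (a, p, x) * v) * w)"
        by (simp add: comm sm_left mult.assoc)
      also have "\<dots> = smult ?c 1" using v w by (simp add: is_inv_def)
      finally show ?thesis using inv_unique[OF v] inv_unique[OF w] by simp
    qed
    show "\<mu> (a, p, x) * \<mu> (b, q, y) - \<mu> (b, q, y) * \<mu> (a, p, x)
             = smult (1 - ?c') (\<mu> (a, p, x) * \<mu> (b, q, y))"
      by (simp add: comm2 sm_diff sm_one)
  qed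
qed

end
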